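(* Let $T$ and $A$ be closed Hermitian subspaces in $X^2$ and $S$ a self-adjoint subspace in $X^2$, with $D(T)=D(S)=:D\subset D(A)$ and $T=S+A$, and assume $\rho(T)\cap\rho(S)\neq\emptyset$. Let $Q:A(0)^\perp\to S(0)^\perp$ be the orthogonal projection. Then $QA_s$ restricted to $D$ is a finite rank operator if and only if $T$ is a finite rank perturbation of $S$.
   Context: $X$ is a complex Hilbert space and $X^2=X\times X$ carries the inner product $\langle (x,f),(y,g)\rangle=\langle x,y\rangle+\langle f,g\rangle$. A subspace $T$ in $X^2$ means a linear subspace of $X^2$ (a linear relation); a linear operator in $X$ is identified with its graph. Notation: $D(T)=\{x:(x,f)\in T \text{ for some } f\}$, $T(x)=\{f:(x,f)\in T\}$, $T^{-1}=\{(f,x):(x,f)\in T\}$, $\lambda I$ is the graph of $x\mapsto \lambda x$. The adjoint is $T^*=\{(y,g)\in X^2:\langle g,x\rangle=\langle y,f\rangle \text{ for all }(x,f)\in T\}$; $T$ is Hermitian if $T\subset T^*$ and self-adjoint if $T=T^*$. For subspaces $S,A$ in $X^2$, $S+A=\{(x,f+g):(x,f)\in S,(x,g)\in A\}$. For a closed subspace $T$, set $T_\infty=\{(0,g)\in X^2:(0,g)\in T\}$ and $T_s=T\ominus T_\infty$ (orthogonal complement of $T_\infty$ in $T$), so $T=T_s\oplus T_\infty$; $T_s$ is the graph of a linear operator (the operator part of $T$) with $D(T_s)=D(T)$ and $R(T_s)\subset T(0)^\perp$. Resolvent set: $\rho(T)=\{\lambda\in\mathbb C:(\lambda I-T)^{-1}$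 is a bounded linear operator defined on all of $X\}$. Finite rank perturbation: for closed subspaces $T,S$ in $X^2$ with orthogonal projections $P_T,P_S$ of $X^2$ onto $T$, $S$, $T$ is a finite rank perturbation of $S$ if $P_T-P_S$ has finite-dimensional range. *)

theory Defs
  imports "HOL-Analysis.Analysis"
begin

text \<open>The library has no complex inner product spaces, so we introduce them as a type
class: a real normed vector space with a compatible complex scalar multiplication and a
complex inner product (linear in the first argument, conjugate-symmetric) inducing the norm.\<close>

class complex_inner = real_normed_vector +
  fixes scaleC :: "complex \<Rightarrow> 'a \<Rightarrow> 'a" (infixr \<open>*\<^sub>C\<close> 75)
    and cinner :: "'a \<Rightarrow> 'a \<Rightarrow> complex"
  assumes scaleC_add_right: "a *\<^sub>C (x + y) = a *\<^sub>C x + a *\<^sub>C y"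
    and scaleC_add_left: "(a + b) *\<^sub>C x = a *\<^sub>C x + b *\<^sub>C x"
    and scaleC_scaleC: "a *\<^sub>C (b *\<^sub>C x) = (a * b) *\<^sub>C x"
    and scaleC_one: "1 *\<^sub>C x = x"
    and scaleR_scaleC: "scaleR r x = complex_of_real r *\<^sub>C x"
    and cinner_commute: "cinner x y = cnj (cinner y x)"
    and cinner_add_left: "cinner (x + y) z = cinner x z + cinner y z"
    and cinner_scaleC_left: "cinner (a *\<^sub>C x) y = a * cinner x y"
    and cinner_self_norm: "cinner x x = complex_of_real ((norm x)\<^sup>2)"

class chilbert_space = complex_inner + complete_space

definition ip2 :: "('a::complex_inner \<times> 'a) \<Rightarrow> ('a \<times> 'a) \<Rightarrow> complex" where
  "ip2 p q = cinner (fst p) (fst q) + cinner (snd p) (snd q)"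

definition scaleC2 :: "complex \<Rightarrow> ('a::complex_inner \<times> 'a) \<Rightarrow> ('a \<times> 'a)" where
  "scaleC2 c p = (c *\<^sub>C fst p, c *\<^sub>C snd p)"

definition lin_subspace :: "('a::complex_inner \<times> 'a) set \<Rightarrow> bool" where
  "lin_subspace T \<longleftrightarrow> (0, 0) \<in> T \<and>
     (\<forall>p\<in>T. \<forall>q\<in>T. p + q \<in> T) \<and> (\<forall>c. \<forall>p\<in>T. scaleC2 c p \<in> T)"

definition adj :: "('a::complex_inner \<times> 'a) set \<Rightarrow> ('a \<times> 'a) set" where
  "adj T = {(y, g). \<forall>(x, f)\<in>T. cinner g x = cinner y f}"

definition hermitian :: "('a::complex_inner \<times> 'a) set \<Rightarrow> bool" where
  "hermitian T \<longleftrightarrow> T \<subseteq> adj T"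

definition self_adjoint :: "('a::complex_inner \<times> 'a) set \<Rightarrow> bool" where
  "self_adjoint T \<longleftrightarrow> T = adj T"

text \<open>Domain D(T) is the library's \<open>Domain T\<close>; T(x) is \<open>T `` {x}\<close>.\<close>

definition rel_sum :: "('a::complex_inner \<times> 'a) set \<Rightarrow> ('a \<times> 'a) set \<Rightarrow> ('a \<times> 'a) set" where
  "rel_sum S A = {(x, f + g) | x f g. (x, f) \<in> S \<and> (x, g) \<in> A}"

definition infty_part :: "('a::complex_inner \<times> 'a) set \<Rightarrow> ('a \<times> 'a) set" where
  "infty_part T = {p \<in> T. fst p = 0}"

definition op_part :: "('a::complex_inner \<times> 'a) set \<Rightarrow> ('a \<times> 'a) set" where
  "op_part T = {p \<in> T. \<forall>q \<in> infty_part T. ip2 p q = 0}"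

definition orth :: "'a::complex_inner set \<Rightarrow> 'a set" where
  "orth M = {y. \<forall>m\<in>M. cinner y m = 0}"

definition oproj :: "('b::ab_group_add \<Rightarrow> 'b \<Rightarrow> complex) \<Rightarrow> 'b set \<Rightarrow> 'b \<Rightarrow> 'b" where
  "oproj ip M x = (THE y. y \<in> M \<and> (\<forall>m\<in>M. ip (x - y) m = 0))"

definition fin_dim :: "(complex \<Rightarrow> 'b \<Rightarrow> 'b) \<Rightarrow> 'b::comm_monoid_add set \<Rightarrow> bool" where
  "fin_dim sc R \<longleftrightarrow> (\<exists>F. finite F \<and> R \<subseteq> {\<Sum>v\<in>F. sc (c v) v | c. True})"

text \<open>Resolvent set: (\<lambda>I - T)^{-1} is a bounded linear operator defined on all of X.\<close>
definition resolvent_set :: "('a::complex_inner \<times> 'a) set \<Rightarrow> complex set" where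
  "resolvent_set T = {l. \<exists>R :: 'a \<Rightarrow> 'a.
      (\<forall>y x. (\<exists>f. (x, f) \<in> T \<and> y = l *\<^sub>C x - f) \<longleftrightarrow> x = R y) \<and>
      (\<forall>y z. R (y + z) = R y + R z) \<and> (\<forall>c y. R (c *\<^sub>C y) = c *\<^sub>C R y) \<and>
      (\<exists>K. \<forall>y. norm (R y) \<le> K * norm y)}"

definition finite_rank_perturbation :: "('a::complex_inner \<times> 'a) set \<Rightarrow> ('a \<times> 'a) set \<Rightarrow> bool" where
  "finite_rank_perturbation T S \<longleftrightarrow>
     fin_dim scaleC2 (range (\<lambda>p. oproj ip2 T p - oproj ip2 S p))"

text \<open>Range of the operator Q A_s restricted to D, where Q : A(0)^\<bottom> \<rightarrow> S(0)^\<bottom> is the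
orthogonal projection (range of A_s lies in A(0)^\<bottom>).\<close>
definition QAs_range :: "('a::complex_inner \<times> 'a) set \<Rightarrow> ('a \<times> 'a) set \<Rightarrow> 'a set \<Rightarrow> 'a set" where
  "QAs_range S A D = {oproj cinner (orth (S `` {0})) f | x f. x \<in> D \<and> (x, f) \<in> op_part A}"

end

theory Submission
  imports Defs
begin


lemma cvs: "vector_space (scaleC :: complex \<Rightarrow> 'a::complex_inner \<Rightarrow> 'a)"
  by unfold_locales (auto simp: scaleC_add_right scaleC_add_left scaleC_scaleC scaleC_one)
interpretation cv: vector_space "scaleC :: complex \<Rightarrow> 'a::complex_inner \<Rightarrow> 'a"
  by (rule cvs)

section \<open>Inner product algebra\<close>

lemma cinner_zero_left[simp]: "cinner 0 y = 0"
  using cinner_add_left[of 0 0 y] by simp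

lemma cinner_zero_right[simp]: "cinner x 0 = 0"
  using cinner_commute[of x 0] by simp

lemma cinner_add_right: "cinner x (y + z) = cinner x y + cinner x z"
  by (metis cinner_add_left cinner_commute complex_cnj_add)

lemma cinner_scaleC_right: "cinner x (a *\<^sub>C y) = cnj a * cinner x y"
  by (metis cinner_commute cinner_scaleC_left complex_cnj_mult)

lemma cinner_minus_left: "cinner (- x) y = - cinner x y"
  using cinner_add_left[of x "-x" y] by (simp add: add_eq_0_iff)

lemma cinner_minus_right: "cinner x (- y) = - cinner x y"
  using cinner_add_right[of x y "-y"] by (simp add: add_eq_0_iff)

lemma cinner_diff_left: "cinner (x - y) z = cinner x z - cinner y z"
  using cinner_add_left[of x "-y" z] by (simp add: cinner_minus_left)

lemma cinner_diff_right: "cinner x (y - z) = cinner x y - cinner x z"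
  using cinner_add_right[of x y "-z"] by (simp add: cinner_minus_right)

lemma cinner_self_zero: "cinner x x = 0 \<longleftrightarrow> x = 0"
  by (simp add: cinner_self_norm)

lemma norm_sq_cinner: "(norm x)\<^sup>2 = Re (cinner x x)"
  by (simp add: cinner_self_norm)

lemma norm_add_sq: "(norm (x + y))\<^sup>2 = (norm x)\<^sup>2 + (norm y)\<^sup>2 + 2 * Re (cinner x y)"
proof -
  have "cinner y x = cnj (cinner x y)" by (rule cinner_commute)
  then show ?thesis
    by (simp add: norm_sq_cinner cinner_add_left cinner_add_right)
qed

lemma norm_diff_sq: "(norm (x - y))\<^sup>2 = (norm x)\<^sup>2 + (norm y)\<^sup>2 - 2 * Re (cinner x y)"
proof -
  have "cinner y x = cnj (cinner x y)" by (rule cinner_commute)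
  then show ?thesis
    by (simp add: norm_sq_cinner cinner_diff_left cinner_diff_right)
qed

lemma polarization:
  "cinner x y = complex_of_real (((norm (x + y))\<^sup>2 - (norm (x - y))\<^sup>2) / 4)
     + \<i> * complex_of_real (((norm (x + \<i> *\<^sub>C y))\<^sup>2 - (norm (x - \<i> *\<^sub>C y))\<^sup>2) / 4)"
  by (simp add: complex_eq_iff norm_add_sq norm_diff_sq cinner_scaleC_right)

lemma continuous_on_cinner_left[continuous_intros]:
  assumes "continuous_on S g"
  shows "continuous_on S (\<lambda>p. cinner (g p) y)"
  unfolding polarization[of "g _" y] by (intro continuous_intros assms) auto

lemma continuous_on_cinner_right[continuous_intros]:
  assumes "continuous_on S g"
  shows "continuous_on S (\<lambda>p. cinner y (g p))"
proof -
  have "continuous_on S (\<lambda>p. cnj (cinner (g p) y))"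
    by (intro continuous_intros assms)
  then show ?thesis by (subst cinner_commute) simp
qed

section \<open>X^2 as an inner product space\<close>

instantiation prod :: (complex_inner, complex_inner) complex_inner
begin
definition scaleC_prod_def: "scaleC c p = (c *\<^sub>C fst p, c *\<^sub>C snd p)"
definition cinner_prod_def: "cinner p q = cinner (fst p) (fst q) + cinner (snd p) (snd q)"
instance
proof
  fix a b :: complex and x y z :: "'a \<times> 'b" and r :: real
  show "a *\<^sub>C (x + y) = a *\<^sub>C x + a *\<^sub>C y"
    by (simp add: scaleC_prod_def scaleC_add_right prod_eq_iff)
  show "(a + b) *\<^sub>C x = a *\<^sub>C x + b *\<^sub>C x"
    by (simp add: scaleC_prod_def scaleC_add_left prod_eq_iff)
  show "a *\<^sub>C b *\<^sub>C x = (a * b) *\<^sub>C x"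
    by (simp add: scaleC_prod_def scaleC_scaleC)
  show "1 *\<^sub>C x = x"
    by (simp add: scaleC_prod_def scaleC_one)
  show "r *\<^sub>R x = complex_of_real r *\<^sub>C x"
    by (simp add: scaleC_prod_def scaleR_scaleC prod_eq_iff)
  show "cinner x y = cnj (cinner y x)"
    by (simp add: cinner_prod_def cinner_commute[of "fst x"] cinner_commute[of "snd x"])
  show "cinner (x + y) z = cinner x z + cinner y z"
    by (simp add: cinner_prod_def cinner_add_left)
  show "cinner (a *\<^sub>C x) y = a * cinner x y"
    by (simp add: cinner_prod_def cinner_scaleC_left scaleC_prod_def algebra_simps)
  show "cinner x x = complex_of_real ((norm x)\<^sup>2)"
    by (simp add: cinner_prod_def cinner_self_norm norm_prod_def)
qed
end

instance prod :: (chilbert_space, chilbert_space) chilbert_space ..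

lemma ip2_eq: "ip2 = cinner"
  by (auto simp: fun_eq_iff ip2_def cinner_prod_def)

lemma scaleC2_eq: "scaleC2 = scaleC"
  by (auto simp: fun_eq_iff scaleC2_def scaleC_prod_def)

lemma scaleC_Pair[simp]: "c *\<^sub>C (x, y) = (c *\<^sub>C x, c *\<^sub>C y)"
  by (simp add: scaleC_prod_def)

lemma cinner_Pair[simp]: "cinner (a, b) (c, d) = cinner a c + cinner b d"
  by (simp add: cinner_prod_def)



definition csub :: "'a::complex_inner set \<Rightarrow> bool" where
  "csub M \<longleftrightarrow> 0 \<in> M \<and> (\<forall>p\<in>M. \<forall>q\<in>M. p + q \<in> M) \<and> (\<forall>c. \<forall>p\<in>M. c *\<^sub>C p \<in> M)"

lemma csub_0: "csub M \<Longrightarrow> 0 \<in> M" by (simp add: csub_def)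
lemma csub_add: "csub M \<Longrightarrow> p \<in> M \<Longrightarrow> q \<in> M \<Longrightarrow> p + q \<in> M" by (simp add: csub_def)
lemma csub_scale: "csub M \<Longrightarrow> p \<in> M \<Longrightarrow> c *\<^sub>C p \<in> M" by (simp add: csub_def)
lemma csub_minus: "csub M \<Longrightarrow> p \<in> M \<Longrightarrow> - p \<in> M"
  using csub_scale[of M p "-1"] by (simp add: cv.scale_minus_left)
lemma csub_diff: "csub M \<Longrightarrow> p \<in> M \<Longrightarrow> q \<in> M \<Longrightarrow> p - q \<in> M"
  using csub_add[of M p "-q"] csub_minus[of M q] by simp
lemma csub_sum: "csub M \<Longrightarrow> (\<And>i. i \<in> I \<Longrightarrow> v i \<in> M) \<Longrightarrow> sum v I \<in> M"
  by (induction I rule: infinite_finite_induct) (auto simp: csub_0 csub_add)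

lemma lin_subspace_csub: "lin_subspace T \<longleftrightarrow> csub T"
  by (simp add: lin_subspace_def csub_def scaleC2_eq zero_prod_def)

lemma f_lemma: "(norm (a + b))\<^sup>2 + (norm (a - b))\<^sup>2 = 2 * (norm a)\<^sup>2 + 2 * (norm (b::'a::complex_inner))\<^sup>2"
  by (simp add: norm_add_sq norm_diff_sq)

lemma orth_step:
  fixes z m :: "'a::complex_inner"
  assumes "m \<noteq> 0"
    and min: "\<And>c. (norm z)\<^sup>2 \<le> (norm (z - c *\<^sub>C m))\<^sup>2"
  shows "cinner z m = 0"
proof -
  define n where "n = (norm m)\<^sup>2"
  have n: "n > 0" using assms by (simp add: n_def)
  define a where "a = cinner z m"
  define c where "c = a / complex_of_real n"
  have mm: "cinner m m = complex_of_real n" by (simp add: n_def cinner_self_norm)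
  have sq: "cmod a * cmod a = Re a * Re a + Im a * Im a"
    using cmod_power2[of a] by (simp add: power2_eq_square)
  have 1: "Re (cinner z (c *\<^sub>C m)) = (cmod a)\<^sup>2 / n"
    using n by (simp add: cinner_scaleC_right c_def a_def[symmetric] cmod_power2 field_simps power2_eq_square sq)
  have 2: "(norm (c *\<^sub>C m))\<^sup>2 = (cmod a)\<^sup>2 / n"
    unfolding norm_sq_cinner using n by (simp add: cinner_scaleC_right cinner_scaleC_left mm c_def cmod_power2 field_simps power2_eq_square sq)
  have "(norm z)\<^sup>2 \<le> (norm z)\<^sup>2 + (cmod a)\<^sup>2 / n - 2 * ((cmod a)\<^sup>2 / n)"
    using min[of c] by (simp add: norm_diff_sq 1 2)
  then have "(cmod a)\<^sup>2 / n \<le> 0" by simp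
  then have "(cmod a)\<^sup>2 \<le> 0" using n by (simp add: divide_le_0_iff)
  then show ?thesis by (simp add: a_def)
qed

lemma proj_exists:
  fixes M :: "'a::chilbert_space set" and x :: 'a
  assumes sub: "csub M" and cl: "closed M"
  shows "\<exists>y\<in>M. \<forall>m\<in>M. cinner (x - y) m = 0"
proof -
  define f where "f m = (norm (x - m))\<^sup>2" for m
  define d where "d = Inf (f ` M)"
  have ne: "f ` M \<noteq> {}" using csub_0[OF sub] by blast
  have bdd: "bdd_below (f ` M)" by (auto simp: f_def intro!: bdd_belowI[of _ 0])
  have dle: "d \<le> f m" if "m \<in> M" for m
    unfolding d_def using cInf_lower[OF _ bdd] that by blast
  have "\<forall>n. \<exists>m\<in>M. f m < d + inverse (real (Suc n))"
  proof
    fix n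
    have "Inf (f ` M) < d + inverse (real (Suc n))" by (simp add: d_def)
    from cInf_lessD[OF ne this] show "\<exists>m\<in>M. f m < d + inverse (real (Suc n))" by blast
  qed
  then obtain s where s: "\<And>n. s n \<in> M" "\<And>n. f (s n) < d + inverse (real (Suc n))"
    by metis
  have half: "(1/2::real) *\<^sub>R (s i + s j) \<in> M" for i j
    unfolding scaleR_scaleC by (intro csub_scale[OF sub] csub_add[OF sub] s)
  have bound: "(norm (s i - s j))\<^sup>2 \<le> 2 * inverse (real (Suc i)) + 2 * inverse (real (Suc j))" for i j
  proof -
    have pl: "(norm ((x - s i) + (x - s j)))\<^sup>2 + (norm ((x - s i) - (x - s j)))\<^sup>2
        = 2 * f (s i) + 2 * f (s j)" unfolding f_def by (rule f_lemma)
    have e1: "(x - s i) + (x - s j) = 2 *\<^sub>R (x - (1/2::real) *\<^sub>R (s i + s j))"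
      by (simp add: algebra_simps scaleR_2)
    have "(norm ((x - s i) + (x - s j)))\<^sup>2 = 4 * f ((1/2::real) *\<^sub>R (s i + s j))"
      unfolding e1 f_def by (simp add: power_mult_distrib)
    moreover have "d \<le> f ((1/2::real) *\<^sub>R (s i + s j))" using dle half by blast
    moreover have "(norm ((x - s i) - (x - s j)))\<^sup>2 = (norm (s i - s j))\<^sup>2"
      by (simp add: norm_minus_commute)
    ultimately show ?thesis using pl s(2)[of i] s(2)[of j] by linarith
  qed
  have "Cauchy s"
    unfolding Cauchy_def
  proof (intro allI impI)
    fix e :: real assume e: "e > 0"
    obtain N where N: "inverse (real (Suc N)) < e\<^sup>2 / 4"
      using reals_Archimedean[of "e\<^sup>2/4"] e by auto
    show "\<exists>M. \<forall>m\<ge>M. \<forall>n\<ge>M. dist (s m) (s n) < e"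
    proof (intro exI allI impI)
      fix m n assume mn: "N \<le> m" "N \<le> n"
      have "inverse (real (Suc m)) \<le> inverse (real (Suc N))"
        using mn by (simp add: le_imp_inverse_le)
      moreover have "inverse (real (Suc n)) \<le> inverse (real (Suc N))"
        using mn by (simp add: le_imp_inverse_le)
      moreover have "(dist (s m) (s n))\<^sup>2 \<le> 2 * inverse (real (Suc m)) + 2 * inverse (real (Suc n))"
        using bound[of m n] by (simp add: dist_norm)
      ultimately have "(dist (s m) (s n))\<^sup>2 < e\<^sup>2"
        using N by linarith
      then show "dist (s m) (s n) < e"
        using e by (simp add: power2_less_imp_less)
    qed
  qed
  then obtain y where y: "s \<longlonglongrightarrow> y"
    using Cauchy_convergent_iff convergent_def by blast
  have yM: "y \<in> M" using closed_sequentially[OF cl s(1) y] .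
  have "f y \<le> d"
  proof (rule LIMSEQ_le)
    show "(\<lambda>n. f (s n)) \<longlonglongrightarrow> f y" unfolding f_def by (intro tendsto_intros y)
    show "(\<lambda>n. d + inverse (real (Suc n))) \<longlonglongrightarrow> d"
      using tendsto_add[OF tendsto_const LIMSEQ_inverse_real_of_nat, of d] by simp
    show "\<exists>N. \<forall>n\<ge>N. f (s n) \<le> d + inverse (real (Suc n))"
      using s(2) less_imp_le by blast
  qed
  then have ymin: "f y \<le> f m" if "m \<in> M" for m using dle[OF that] by linarith
  have "\<forall>m\<in>M. cinner (x - y) m = 0"
  proof
    fix m assume m: "m \<in> M"
    show "cinner (x - y) m = 0"
    proof (cases "m = 0")
      case True then show ?thesis by simp
    next
      case False
      show ?thesis
      proof (rule orth_step[OF False])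
        fix c
        have "y + c *\<^sub>C m \<in> M" by (intro csub_add[OF sub] csub_scale[OF sub] yM m)
        from ymin[OF this] show "(norm (x - y))\<^sup>2 \<le> (norm (x - y - c *\<^sub>C m))\<^sup>2"
          by (simp add: f_def algebra_simps)
      qed
    qed
  qed
  with yM show ?thesis by blast
qed

lemma proj_unique:
  fixes M :: "'a::complex_inner set"
  assumes sub: "csub M" and "y1 \<in> M" "y2 \<in> M"
    and "\<forall>m\<in>M. cinner (x - y1) m = 0" "\<forall>m\<in>M. cinner (x - y2) m = 0"
  shows "y1 = y2"
proof -
  have d: "y1 - y2 \<in> M" using csub_diff[OF sub] assms by blast
  have "cinner (y1 - y2) (y1 - y2) = cinner (x - y2) (y1 - y2) - cinner (x - y1) (y1 - y2)"
    by (simp add: cinner_diff_left)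
  also have "\<dots> = 0" using assms d by simp
  finally show ?thesis by (simp add: cinner_self_zero)
qed

lemma oproj_eq:
  fixes M :: "'a::complex_inner set"
  assumes "csub M" "y \<in> M" "\<forall>m\<in>M. cinner (x - y) m = 0"
  shows "oproj cinner M x = y"
  unfolding oproj_def
  by (rule the_equality) (use assms proj_unique in blast)+

lemma oproj_props:
  fixes M :: "'a::chilbert_space set"
  assumes "csub M" "closed M"
  shows "oproj cinner M x \<in> M" "\<forall>m\<in>M. cinner (x - oproj cinner M x) m = 0"
proof -
  obtain y where "y \<in> M" "\<forall>m\<in>M. cinner (x - y) m = 0" using proj_exists[OF assms] by blast
  moreover then have "oproj cinner M x = y" using oproj_eq[OF assms(1)] by blast
  ultimately show "oproj cinner M x \<in> M" "\<forall>m\<in>M. cinner (x - oproj cinner M x) m = 0" by auto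
qed

lemma oproj_add:
  fixes M :: "'a::chilbert_space set"
  assumes "csub M" "closed M"
  shows "oproj cinner M (x + y) = oproj cinner M x + oproj cinner M y"
  apply (rule oproj_eq[OF assms(1)])
  using oproj_props[OF assms, of x] oproj_props[OF assms, of y]
  by (auto intro: csub_add[OF assms(1)] simp: cinner_add_left cinner_diff_left algebra_simps)

lemma oproj_scale:
  fixes M :: "'a::chilbert_space set"
  assumes "csub M" "closed M"
  shows "oproj cinner M (c *\<^sub>C x) = c *\<^sub>C oproj cinner M x"
proof (rule oproj_eq[OF assms(1)])
  show "c *\<^sub>C oproj cinner M x \<in> M" using oproj_props[OF assms, of x] csub_scale[OF assms(1)] by blast
  show "\<forall>m\<in>M. cinner (c *\<^sub>C x - c *\<^sub>C oproj cinner M x) m = 0"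
    using oproj_props(2)[OF assms, of x]
    by (simp add: cv.scale_right_diff_distrib[symmetric] cinner_scaleC_left)
qed

lemma oproj_self:
  fixes M :: "'a::complex_inner set"
  assumes "csub M" "x \<in> M"
  shows "oproj cinner M x = x"
  using oproj_eq[OF assms(1,2)] by simp



lemma orth_anti: "A \<subseteq> B \<Longrightarrow> orth B \<subseteq> orth A"
  by (auto simp: orth_def)

lemma orth_orth_sup: "A \<subseteq> orth (orth A)"
proof
  fix x assume x: "x \<in> A"
  have "cinner x y = 0" if "y \<in> orth A" for y
  proof -
    have "cinner y x = 0" using that x by (simp add: orth_def)
    then show ?thesis by (subst cinner_commute) simp
  qed
  then show "x \<in> orth (orth A)" by (simp add: orth_def)
qed

lemma orth3: "orth (orth (orth A)) = orth A"
  by (meson antisym orth_anti orth_orth_sup)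

lemma csub_orth: "csub (orth A)"
  by (auto simp: csub_def orth_def cinner_add_left cinner_scaleC_left)

lemma closed_orth: "closed (orth (A::'a::complex_inner set))"
proof -
  have "orth A = (\<Inter>m\<in>A. {y. cinner y m = 0})" by (auto simp: orth_def)
  moreover have "closed {y. cinner y m = 0}" for m :: 'a
    by (intro closed_Collect_eq continuous_intros)
  ultimately show ?thesis by auto
qed

lemma closed_adj: "closed (adj (T::('a::complex_inner \<times> 'a) set))"
proof -
  have "adj T = (\<Inter>p\<in>T. {q. cinner (snd q) (fst p) = cinner (fst q) (snd p)})"
    unfolding adj_def by (auto; metis fst_conv snd_conv)
  moreover have "closed {q::'a\<times>'a. cinner (snd q) (fst p) = cinner (fst q) (snd p)}" for p
    by (intro closed_Collect_eq continuous_intros)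
  ultimately show ?thesis by auto
qed

lemma closed_fiber0:
  assumes "closed (A::('a::real_normed_vector \<times> 'a) set)"
  shows "closed (A `` {0})"
proof -
  have "A `` {0} = (\<lambda>a. (0, a)) -` A" by auto
  moreover have "closed ((\<lambda>a::'a. (0, a)) -` A)"
    by (rule continuous_closed_vimage[OF assms]) (intro continuous_intros)
  ultimately show ?thesis by simp
qed

definition lin_on :: "'a::complex_inner set \<Rightarrow> ('a \<Rightarrow> 'b::complex_inner) \<Rightarrow> bool" where
  "lin_on U f \<longleftrightarrow> (\<forall>u\<in>U. \<forall>v\<in>U. f (u + v) = f u + f v) \<and> (\<forall>c. \<forall>u\<in>U. f (c *\<^sub>C u) = c *\<^sub>C f u)"

lemma lin_on_diff:
  assumes "csub U" "lin_on U f" "u \<in> U" "v \<in> U"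
  shows "f (u - v) = f u - f v"
proof -
  have "u - v \<in> U" using csub_diff assms by blast
  then have "f ((u - v) + v) = f (u - v) + f v" using assms unfolding lin_on_def by blast
  then show ?thesis by (simp add: algebra_simps)
qed

lemma lin_on_sum:
  assumes "csub U" "lin_on U f" "finite I" "\<And>i. i \<in> I \<Longrightarrow> v i \<in> U"
  shows "f (\<Sum>i\<in>I. c i *\<^sub>C v i) = (\<Sum>i\<in>I. c i *\<^sub>C f (v i))"
  using assms(3,4)
proof (induction I rule: finite_induct)
  case empty
  have "f (0 *\<^sub>C 0) = 0 *\<^sub>C f 0" using assms(1,2) csub_0 unfolding lin_on_def by blast
  then show ?case by simp
next
  case (insert a I)
  have s: "(\<Sum>i\<in>I. c i *\<^sub>C v i) \<in> U"
    using insert by (intro csub_sum[OF assms(1)] csub_scale[OF assms(1)]) auto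
  have a: "c a *\<^sub>C v a \<in> U" using insert csub_scale[OF assms(1)] by auto
  have "f (\<Sum>i\<in>insert a I. c i *\<^sub>C v i) = f (c a *\<^sub>C v a) + f (\<Sum>i\<in>I. c i *\<^sub>C v i)"
    using insert s a assms(2) by (simp add: lin_on_def)
  also have "\<dots> = c a *\<^sub>C f (v a) + (\<Sum>i\<in>I. c i *\<^sub>C f (v i))"
    using insert assms(2) by (simp add: lin_on_def)
  finally show ?case using insert by simp
qed

lemma fin_dim_iff: "fin_dim scaleC R \<longleftrightarrow> (\<exists>F. finite F \<and> R \<subseteq> cv.span F)"
proof -
  have eq: "{\<Sum>v\<in>F. c v *\<^sub>C v | c. True} = cv.span F" if "finite F" for F :: "'a set"
    using cv.span_finite[OF that] by auto
  show ?thesis unfolding fin_dim_def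
  proof
    assume "\<exists>F. finite F \<and> R \<subseteq> {\<Sum>v\<in>F. c v *\<^sub>C v | c. True}"
    then obtain F where F: "finite F" "R \<subseteq> {\<Sum>v\<in>F. c v *\<^sub>C v | c. True}" by blast
    have "R \<subseteq> cv.span F" using F(2) unfolding eq[OF F(1)] .
    then show "\<exists>F. finite F \<and> R \<subseteq> cv.span F" using F(1) by blast
  next
    assume "\<exists>F. finite F \<and> R \<subseteq> cv.span F"
    then obtain F where F: "finite F" "R \<subseteq> cv.span F" by blast
    have "R \<subseteq> {\<Sum>v\<in>F. c v *\<^sub>C v | c. True}" unfolding eq[OF F(1)] by (rule F(2))
    then show "\<exists>F. finite F \<and> R \<subseteq> {\<Sum>v\<in>F. c v *\<^sub>C v | c. True}" using F(1) by blast
  qed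
qed


lemma fin_lemma:
  fixes U :: "'a::complex_inner set" and Psi :: "'a \<Rightarrow> 'b::complex_inner" and Phi :: "'a \<Rightarrow> 'c::complex_inner"
  assumes U: "csub U" and lPsi: "lin_on U Psi" and lPhi: "lin_on U Phi"
    and ker: "\<And>u. u \<in> U \<Longrightarrow> Psi u = 0 \<Longrightarrow> Phi u = 0"
    and F: "finite F" "Psi ` U \<subseteq> cv.span F"
  shows "\<exists>G. finite G \<and> Phi ` U \<subseteq> cv.span G"
proof -
  obtain B where B: "B \<subseteq> Psi ` U" "cv.independent B" "Psi ` U \<subseteq> cv.span B"
    by (meson cv.basis_exists)
  have "B \<subseteq> cv.span F" using B(1) F(2) by (rule order_trans)
  then have fB: "finite B" using cv.independent_span_bound[OF F(1) B(2)] by simp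
  have "\<forall>w\<in>B. \<exists>u\<in>U. Psi u = w" using B(1) by blast
  then obtain g where g: "\<And>w. w \<in> B \<Longrightarrow> g w \<in> U \<and> Psi (g w) = w" by metis
  show ?thesis
  proof (intro exI conjI)
    show "finite (Phi ` g ` B)" using fB by simp
    show "Phi ` U \<subseteq> cv.span (Phi ` g ` B)"
    proof
      fix z assume "z \<in> Phi ` U"
      then obtain u where u: "z = Phi u" "u \<in> U" by (rule imageE)
      have "Psi u \<in> cv.span B" using subsetD[OF B(3) imageI[OF u(2)]] .
      then have "Psi u \<in> range (\<lambda>c. \<Sum>w\<in>B. c w *\<^sub>C w)" unfolding cv.span_finite[OF fB] .
      then obtain c where c: "Psi u = (\<Sum>w\<in>B. c w *\<^sub>C w)" by (rule rangeE)
      define v where "v = (\<Sum>w\<in>B. c w *\<^sub>C g w)"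
      have vU: "v \<in> U" unfolding v_def
        by (rule csub_sum[OF U], rule csub_scale[OF U], simp add: g)
      have "Psi v = (\<Sum>w\<in>B. c w *\<^sub>C Psi (g w))"
        unfolding v_def by (rule lin_on_sum[OF U lPsi fB]) (simp add: g)
      also have "\<dots> = Psi u" unfolding c by (rule sum.cong) (simp_all add: g)
      finally have "Psi (u - v) = 0" using lin_on_diff[OF U lPsi u(2) vU] by simp
      then have "Phi (u - v) = 0" using ker[OF csub_diff[OF U u(2) vU]] by simp
      then have "Phi u = Phi v" using lin_on_diff[OF U lPhi u(2) vU] by simp
      also have "\<dots> = (\<Sum>w\<in>B. c w *\<^sub>C Phi (g w))"
        unfolding v_def by (rule lin_on_sum[OF U lPhi fB]) (simp add: g)
      also have "\<dots> \<in> cv.span (Phi ` g ` B)"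
        by (rule cv.span_sum, rule cv.span_scale, rule cv.span_base, simp)
      finally show "z \<in> cv.span (Phi ` g ` B)" unfolding u(1) .
    qed
  qed
qed



lemma pair_add_mem: "csub M \<Longrightarrow> (a, b) \<in> M \<Longrightarrow> (c, d) \<in> M \<Longrightarrow> (a + c, b + d) \<in> M"
  using csub_add[of M "(a,b)" "(c,d)"] by simp
lemma pair_diff_mem: "csub M \<Longrightarrow> (a, b) \<in> M \<Longrightarrow> (c, d) \<in> M \<Longrightarrow> (a - c, b - d) \<in> M"
  using csub_diff[of M "(a,b)" "(c,d)"] by simp
lemma pair_scale_mem: "csub M \<Longrightarrow> (a, b) \<in> M \<Longrightarrow> (c *\<^sub>C a, c *\<^sub>C b) \<in> M"
  using csub_scale[of M "(a,b)" c] by simp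

lemma csub_Int: "csub A \<Longrightarrow> csub B \<Longrightarrow> csub (A \<inter> B)"
  by (simp add: csub_def)

lemma csub_perp: "csub M \<Longrightarrow> csub {t\<in>M. \<forall>k\<in>K. cinner t k = 0}"
  by (simp add: csub_def cinner_add_left cinner_scaleC_left)

lemma fst_scaleC: "fst (c *\<^sub>C p) = c *\<^sub>C fst p"
  by (simp add: scaleC_prod_def)

theorem theorem3p7:
  fixes T S A :: "('a::chilbert_space \<times> 'a) set"
  assumes "lin_subspace T" and "closed T" and "hermitian T"
    and "lin_subspace A" and "closed A" and "hermitian A"
    and "lin_subspace S" and "self_adjoint S"
    and "Domain T = Domain S" and "Domain S \<subseteq> Domain A"
    and "T = rel_sum S A"
    and "resolvent_set T \<inter> resolvent_set S \<noteq> {}"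
  shows "fin_dim scaleC (QAs_range S A (Domain T)) \<longleftrightarrow> finite_rank_perturbation T S"
proof -
  have Tsub: "csub T" using assms(1) lin_subspace_csub by blast
  have Asub: "csub A" using assms(4) lin_subspace_csub by blast
  have Ssub: "csub S" using assms(7) lin_subspace_csub by blast
  have Tcl: "closed T" by (rule assms(2))
  have Sadj: "S = adj S" using assms(8) by (simp add: self_adjoint_def)
  have Scl: "closed S" using closed_adj[of S] Sadj by simp
  have Aadj: "A \<subseteq> adj A" using assms(6) by (simp add: hermitian_def)
  have Trs: "T = rel_sum S A" by (rule assms(11))
  define D where "D = Domain T"
  have DS: "Domain S = D" using assms(9) by (simp add: D_def)
  have DA: "D \<subseteq> Domain A" using assms(10) DS by simp
  define N where "N = S `` {0}"
  have Nmem: "a \<in> N \<longleftrightarrow> (0, a) \<in> S" for a by (simp add: N_def)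
  have N_eq: "N = orth D"
  proof -
    have "a \<in> N \<longleftrightarrow> (\<forall>(x, f)\<in>S. cinner a x = 0)" for a
    proof -
      have "a \<in> N \<longleftrightarrow> (0, a) \<in> adj S" using Sadj Nmem by simp
      also have "\<dots> \<longleftrightarrow> (\<forall>(x, f)\<in>S. cinner a x = 0)" by (simp add: adj_def)
      finally show ?thesis .
    qed
    then show ?thesis using DS by (auto simp: orth_def)
  qed
  define ON where "ON = orth N"
  have ONsub: "csub ON" and ONcl: "closed ON" by (simp_all add: ON_def csub_orth closed_orth)
  define Q where "Q = oproj cinner ON"
  have Q1: "Q f \<in> ON" for f using oproj_props(1)[OF ONsub ONcl] by (simp add: Q_def)
  have Q2: "f - Q f \<in> N" for f
  proof -
    have "f - Q f \<in> orth ON"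
      using oproj_props(2)[OF ONsub ONcl, of f] by (simp add: orth_def Q_def)
    then show ?thesis unfolding ON_def N_eq orth3 .
  qed
  have Qadd: "Q (f + g) = Q f + Q g" for f g unfolding Q_def by (rule oproj_add[OF ONsub ONcl])
  have Qscale: "Q (c *\<^sub>C f) = c *\<^sub>C Q f" for c f unfolding Q_def by (rule oproj_scale[OF ONsub ONcl])
  define A0 where "A0 = A `` {0}"
  have A0sub: "csub A0"
  proof -
    have "(0, 0) \<in> A" using csub_0[OF Asub] by (simp add: zero_prod_def)
    moreover have "(0, a + b) \<in> A" if "(0, a) \<in> A" "(0, b) \<in> A" for a b
      using pair_add_mem[OF Asub that] by simp
    moreover have "(0, c *\<^sub>C a) \<in> A" if "(0, a) \<in> A" for a c
      using pair_scale_mem[OF Asub that, of c] by simp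
    ultimately show ?thesis by (auto simp: csub_def A0_def)
  qed
  have A0cl: "closed A0" unfolding A0_def by (rule closed_fiber0[OF assms(5)])
  have A0N: "A0 \<subseteq> N"
  proof
    fix a assume "a \<in> A0"
    then have "(0, a) \<in> adj A" using Aadj by (auto simp: A0_def)
    then have "\<forall>(x, f)\<in>A. cinner a x = 0" by (simp add: adj_def)
    then have "a \<in> orth (Domain A)" by (auto simp: orth_def)
    then show "a \<in> N" using orth_anti[OF DA] N_eq by blast
  qed
  have opc: "(x, f) \<in> op_part A \<longleftrightarrow> (x, f) \<in> A \<and> (\<forall>a\<in>A0. cinner f a = 0)" for x f
    by (auto simp: op_part_def infty_part_def ip2_eq A0_def)
  have op_ex: "\<exists>f. (x, f) \<in> op_part A" if xA: "x \<in> Domain A" for x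
  proof -
    obtain g where g: "(x, g) \<in> A" using xA by blast
    define PA where "PA = oproj cinner A0"
    have "PA g \<in> A0" using oproj_props(1)[OF A0sub A0cl] by (simp add: PA_def)
    then have "(0, PA g) \<in> A" by (simp add: A0_def)
    then have "(x - 0, g - PA g) \<in> A" using pair_diff_mem[OF Asub g] by blast
    moreover have "\<forall>a\<in>A0. cinner (g - PA g) a = 0"
      using oproj_props(2)[OF A0sub A0cl] by (simp add: PA_def)
    ultimately show ?thesis using opc by auto
  qed
  have op_un: "f1 = f2" if "(x, f1) \<in> op_part A" "(x, f2) \<in> op_part A" for x f1 f2
  proof -
    have "(x - x, f1 - f2) \<in> A" using pair_diff_mem[OF Asub] that opc by blast
    then have d: "f1 - f2 \<in> A0" by (simp add: A0_def)
    have "cinner (f1 - f2) (f1 - f2) = cinner f1 (f1 - f2) - cinner f2 (f1 - f2)"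
      by (simp add: cinner_diff_left)
    also have "\<dots> = 0" using that opc d by simp
    finally show ?thesis by (simp add: cinner_self_zero)
  qed
  define fA where "fA x = (SOME f. (x, f) \<in> op_part A)" for x
  have fA: "(x, fA x) \<in> op_part A" if "x \<in> D" for x
    unfolding fA_def using op_ex DA that by (meson someI_ex subsetD)
  have fAA: "(x, fA x) \<in> A" if "x \<in> D" for x using fA[OF that] opc by blast
  define b where "b x = Q (fA x)" for x
  have bON: "b x \<in> ON" for x by (simp add: b_def Q1)
  have Dadd: "x + y \<in> D" if xy: "x \<in> D" "y \<in> D" for x y
  proof -
    obtain u v where "(x, u) \<in> T" "(y, v) \<in> T" using xy by (auto simp: D_def)
    then have "(x + y, u + v) \<in> T" by (rule pair_add_mem[OF Tsub])
    then show ?thesis unfolding D_def by (rule DomainI)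
  qed
  have Dscale: "c *\<^sub>C x \<in> D" if xD: "x \<in> D" for x c
  proof -
    obtain u where "(x, u) \<in> T" using xD by (auto simp: D_def)
    then have "(c *\<^sub>C x, c *\<^sub>C u) \<in> T" by (rule pair_scale_mem[OF Tsub])
    then show ?thesis unfolding D_def by (rule DomainI)
  qed
  have b_add: "b (x + y) = b x + b y" if "x \<in> D" "y \<in> D" for x y
  proof -
    have "(x + y, fA x + fA y) \<in> op_part A"
      using pair_add_mem[OF Asub fAA[OF that(1)] fAA[OF that(2)]] fA[OF that(1)] fA[OF that(2)] opc
      by (simp add: cinner_add_left)
    then have "fA (x + y) = fA x + fA y" using op_un fA Dadd that by blast
    then show ?thesis by (simp add: b_def Qadd)
  qed
  have b_scale: "b (c *\<^sub>C x) = c *\<^sub>C b x" if "x \<in> D" for x c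
  proof -
    have "(c *\<^sub>C x, c *\<^sub>C fA x) \<in> op_part A"
      using pair_scale_mem[OF Asub fAA[OF that]] fA[OF that] opc
      by (simp add: cinner_scaleC_left)
    then have "fA (c *\<^sub>C x) = c *\<^sub>C fA x" using op_un fA Dscale that by blast
    then show ?thesis by (simp add: b_def Qscale)
  qed
  have R1: "(x, h + b x) \<in> T" if "x \<in> D" "(x, h) \<in> S" for x h
  proof -
    let ?f = "fA x"
    have "(0, ?f - Q ?f) \<in> S" using Q2 Nmem by blast
    then have "(x - 0, h - (?f - Q ?f)) \<in> S" using pair_diff_mem[OF Ssub that(2)] by blast
    then have "(x, h - (?f - Q ?f)) \<in> S" by simp
    then have "(x, (h - (?f - Q ?f)) + ?f) \<in> T"
      unfolding Trs rel_sum_def using fAA[OF that(1)] by blast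
    moreover have "(h - (?f - Q ?f)) + ?f = h + b x" by (simp add: b_def algebra_simps)
    ultimately show ?thesis by simp
  qed
  have R2: "x \<in> D \<and> (x, y - b x) \<in> S" if xyT: "(x, y) \<in> T" for x y
  proof -
    obtain h1 g where hg: "y = h1 + g" "(x, h1) \<in> S" "(x, g) \<in> A"
      using xyT unfolding Trs rel_sum_def by blast
    have xD: "x \<in> D" using hg(2) DS by blast
    let ?f = "fA x"
    have "(x - x, g - ?f) \<in> A" using pair_diff_mem[OF Asub hg(3) fAA[OF xD]] .
    then have "g - ?f \<in> A0" by (simp add: A0_def)
    then have "(0, g - ?f) \<in> S" using A0N Nmem by blast
    moreover have "(0, ?f - Q ?f) \<in> S" using Q2 Nmem by blast
    ultimately have "(0 + 0, (g - ?f) + (?f - Q ?f)) \<in> S" using pair_add_mem[OF Ssub] by blast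
    then have "(x + (0 + 0), h1 + ((g - ?f) + (?f - Q ?f))) \<in> S" using pair_add_mem[OF Ssub hg(2)] by blast
    moreover have "h1 + ((g - ?f) + (?f - Q ?f)) = y - b x" by (simp add: hg(1) b_def algebra_simps)
    ultimately show ?thesis using xD by simp
  qed
  have bzero: "b x = 0" if "(x, y) \<in> T" "(x, y) \<in> S" for x y
  proof -
    have "(x, y - b x) \<in> S" using R2[OF that(1)] by blast
    then have "(x - x, y - (y - b x)) \<in> S" using pair_diff_mem[OF Ssub that(2)] by blast
    then have "b x \<in> N" using Nmem by simp
    moreover have "b x \<in> orth N" using bON by (simp add: ON_def)
    ultimately have "cinner (b x) (b x) = 0" by (simp add: orth_def)
    then show ?thesis by (simp add: cinner_self_zero)
  qed
  have range_eq: "QAs_range S A (Domain T) = b ` D"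
  proof
    show "QAs_range S A (Domain T) \<subseteq> b ` D"
    proof
      fix z assume "z \<in> QAs_range S A (Domain T)"
      then obtain x f where xf: "z = Q f" "x \<in> D" "(x, f) \<in> op_part A"
        by (auto simp: QAs_range_def D_def N_def ON_def Q_def)
      then have "f = fA x" using op_un fA by blast
      then show "z \<in> b ` D" using xf by (auto simp: b_def)
    qed
    show "b ` D \<subseteq> QAs_range S A (Domain T)"
      using fA by (auto simp: QAs_range_def D_def N_def ON_def Q_def b_def)
  qed
  have lin_b: "lin_on M (\<lambda>t. b (fst t))" if "M \<subseteq> T" for M
  proof -
    have "fst t \<in> D" if "t \<in> M" for t
      using that \<open>M \<subseteq> T\<close> unfolding D_def by (metis DomainI prod.collapse subsetD)
    then show ?thesis by (auto simp: lin_on_def b_add b_scale fst_scaleC)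
  qed
  show ?thesis
  proof
    assume "fin_dim scaleC (QAs_range S A (Domain T))"
    then obtain G where G: "finite G" "b ` D \<subseteq> cv.span G"
      unfolding range_eq fin_dim_iff by blast
    define K where "K = S \<inter> T"
    have Ksub: "csub K" using csub_Int[OF Ssub Tsub] by (simp add: K_def)
    have Kcl: "closed K" using Scl Tcl by (simp add: K_def closed_Int)
    define PK where "PK = oproj cinner K"
    define PT where "PT = oproj cinner T"
    define PS where "PS = oproj cinner S"
    define WT where "WT = {t\<in>T. \<forall>k\<in>K. cinner t k = 0}"
    define WS where "WS = {t\<in>S. \<forall>k\<in>K. cinner t k = 0}"
    have WTsub: "csub WT" unfolding WT_def by (rule csub_perp[OF Tsub])
    have WSsub: "csub WS" unfolding WS_def by (rule csub_perp[OF Ssub])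
    have lin_id: "lin_on M (\<lambda>t. t)" for M :: "('a \<times> 'a) set" by (simp add: lin_on_def)
    have selfz: "t = 0" if "t \<in> K" "\<forall>k\<in>K. cinner t k = 0" for t
      using that cinner_self_zero by blast
    obtain GT where GT: "finite GT" "(\<lambda>t. t) ` WT \<subseteq> cv.span GT"
    proof -
      have "\<exists>GT. finite GT \<and> (\<lambda>t. t) ` WT \<subseteq> cv.span GT"
      proof (rule fin_lemma[OF WTsub lin_b lin_id _ G(1)])
        show "WT \<subseteq> T" by (auto simp: WT_def)
        show "(\<lambda>t. b (fst t)) ` WT \<subseteq> cv.span G"
        proof
          fix z assume "z \<in> (\<lambda>t. b (fst t)) ` WT"
          then obtain x y where "z = b x" "(x, y) \<in> T" by (auto simp: WT_def)
          then show "z \<in> cv.span G" using G(2) R2 by blast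
        qed
        fix u assume u: "u \<in> WT" "b (fst u) = 0"
        obtain x y where xy: "u = (x, y)" by (cases u)
        have "(x, y) \<in> T" using u xy by (simp add: WT_def)
        then have "(x, y) \<in> S" using R2 u xy by fastforce
        then have "u \<in> K" using u xy by (simp add: K_def WT_def)
        then show "u = 0" using selfz u by (simp add: WT_def)
      qed
      then show ?thesis using that by blast
    qed
    obtain GS where GS: "finite GS" "(\<lambda>t. t) ` WS \<subseteq> cv.span GS"
    proof -
      have "\<exists>GS. finite GS \<and> (\<lambda>t. t) ` WS \<subseteq> cv.span GS"
      proof (rule fin_lemma[OF WSsub _ lin_id _ G(1)])
        have "lin_on S (\<lambda>t. b (fst t))"
        proof -
          have "fst t \<in> D" if "t \<in> S" for t
            using that unfolding DS[symmetric] by (metis DomainI prod.collapse)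
          then show ?thesis by (auto simp: lin_on_def b_add b_scale fst_scaleC)
        qed
        then show "lin_on WS (\<lambda>t. b (fst t))" by (auto simp: lin_on_def WS_def)
        show "(\<lambda>t. b (fst t)) ` WS \<subseteq> cv.span G"
        proof
          fix z assume "z \<in> (\<lambda>t. b (fst t)) ` WS"
          then obtain x y where "z = b x" "(x, y) \<in> S" by (auto simp: WS_def)
          then show "z \<in> cv.span G" using G(2) DS by blast
        qed
        fix u assume u: "u \<in> WS" "b (fst u) = 0"
        obtain x y where xy: "u = (x, y)" by (cases u)
        have S1: "(x, y) \<in> S" using u xy by (simp add: WS_def)
        have "x \<in> D" using S1 DS by blast
        then have "(x, y + b x) \<in> T" using R1 S1 by blast
        then have "(x, y) \<in> T" using u xy by simp
        then have "u \<in> K" using S1 xy by (simp add: K_def)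
        then show "u = 0" using selfz u by (simp add: WS_def)
      qed
      then show ?thesis using that by blast
    qed
    have "range (\<lambda>p. PT p - PS p) \<subseteq> cv.span (GT \<union> GS)"
    proof
      fix z assume "z \<in> range (\<lambda>p. PT p - PS p)"
      then obtain p where p: "z = PT p - PS p" by blast
      have PKK: "PK p \<in> K" using oproj_props(1)[OF Ksub Kcl] by (simp add: PK_def)
      have PKo: "\<forall>k\<in>K. cinner (p - PK p) k = 0" using oproj_props(2)[OF Ksub Kcl] by (simp add: PK_def)
      have "PT p - PK p \<in> WT"
      proof -
        have "PT p \<in> T" using oproj_props(1)[OF Tsub Tcl] by (simp add: PT_def)
        then have "PT p - PK p \<in> T" using PKK csub_diff[OF Tsub] by (auto simp: K_def)
        moreover have "cinner (PT p - PK p) k = 0" if "k \<in> K" for k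
        proof -
          have "cinner (p - PT p) k = 0"
            using oproj_props(2)[OF Tsub Tcl] that by (simp add: PT_def K_def)
          moreover have "PT p - PK p = (p - PK p) - (p - PT p)" by (simp add: algebra_simps)
          ultimately show ?thesis using PKo that by (simp add: cinner_diff_left)
        qed
        ultimately show ?thesis by (simp add: WT_def)
      qed
      moreover have "PS p - PK p \<in> WS"
      proof -
        have "PS p \<in> S" using oproj_props(1)[OF Ssub Scl] by (simp add: PS_def)
        then have "PS p - PK p \<in> S" using PKK csub_diff[OF Ssub] by (auto simp: K_def)
        moreover have "cinner (PS p - PK p) k = 0" if "k \<in> K" for k
        proof -
          have "cinner (p - PS p) k = 0"
            using oproj_props(2)[OF Ssub Scl] that by (simp add: PS_def K_def)
          moreover have "PS p - PK p = (p - PK p) - (p - PS p)" by (simp add: algebra_simps)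
          ultimately show ?thesis using PKo that by (simp add: cinner_diff_left)
        qed
        ultimately show ?thesis by (simp add: WS_def)
      qed
      ultimately have "PT p - PK p \<in> cv.span (GT \<union> GS)" "PS p - PK p \<in> cv.span (GT \<union> GS)"
        using GT(2) GS(2) cv.span_mono[of GT "GT \<union> GS"] cv.span_mono[of GS "GT \<union> GS"] by auto
      then have "(PT p - PK p) - (PS p - PK p) \<in> cv.span (GT \<union> GS)" by (rule cv.span_diff)
      then show "z \<in> cv.span (GT \<union> GS)" using p by simp
    qed
    then have "fin_dim scaleC (range (\<lambda>p. PT p - PS p))"
      unfolding fin_dim_iff using GT(1) GS(1) by blast
    then show "finite_rank_perturbation T S"
      by (simp add: finite_rank_perturbation_def scaleC2_eq ip2_eq PT_def PS_def)
  next
    assume "finite_rank_perturbation T S"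
    then have "fin_dim scaleC (range (\<lambda>p. oproj cinner T p - oproj cinner S p))"
      by (simp add: finite_rank_perturbation_def scaleC2_eq ip2_eq)
    then obtain F where F: "finite F" "range (\<lambda>p. oproj cinner T p - oproj cinner S p) \<subseteq> cv.span F"
      unfolding fin_dim_iff by blast
    define PS where "PS = oproj cinner S"
    have lin_Psi: "lin_on T (\<lambda>t. t - PS t)"
      unfolding lin_on_def PS_def
      by (simp add: oproj_add[OF Ssub Scl] oproj_scale[OF Ssub Scl] cv.scale_right_diff_distrib)
    have "\<exists>G. finite G \<and> (\<lambda>t. b (fst t)) ` T \<subseteq> cv.span G"
    proof (rule fin_lemma[OF Tsub lin_Psi lin_b[OF order_refl] _ F(1)])
      show "(\<lambda>t. t - PS t) ` T \<subseteq> cv.span F"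
      proof
        fix z assume "z \<in> (\<lambda>t. t - PS t) ` T"
        then obtain t where t: "t \<in> T" "z = t - PS t" by blast
        have "oproj cinner T t = t" using oproj_self[OF Tsub t(1)] .
        then have "z = oproj cinner T t - oproj cinner S t" using t by (simp add: PS_def)
        then show "z \<in> cv.span F" using F(2) by blast
      qed
      fix u assume u: "u \<in> T" "u - PS u = 0"
      then have "u = PS u" by simp
      moreover have "PS u \<in> S" using oproj_props(1)[OF Ssub Scl] by (simp add: PS_def)
      ultimately have "u \<in> S" by simp
      then show "b (fst u) = 0" using bzero u(1) by (cases u) auto
    qed
    then obtain G where G: "finite G" "(\<lambda>t. b (fst t)) ` T \<subseteq> cv.span G" by blast
    have "b ` D \<subseteq> cv.span G"
    proof
      fix z assume "z \<in> b ` D"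
      then obtain x y where "z = b x" "(x, y) \<in> T" by (auto simp: D_def)
      then show "z \<in> cv.span G" using G(2) by force
    qed
    then show "fin_dim scaleC (QAs_range S A (Domain T))"
      unfolding range_eq fin_dim_iff using G(1) by blast
  qed
qed

end
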